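(* Let $F$ be a field of characteristic not $2$, let $a\in F^*$ be a non-square, and let $L=F(\sqrt{a})$. Then $L^{(2)}\subset F^{(3)}$.
   Context: All fields are taken inside a fixed quadratic closure $F_q$ of $F$. For a field $K$ of characteristic not $2$, define $K^{(1)}=K$ and, for $n\ge 1$, $K^{(n+1)}$ is the compositum of all quadratic extensions of $K^{(n)}$ which are Galois over $K$. *)

theory Defs
  imports "HOL-Computational_Algebra.Polynomial"
begin

text \<open>All fields are subfields of an ambient field of type 'a (playing the role of
the fixed quadratic closure F_q).\<close>

definition is_subfield :: "'a::field set \<Rightarrow> bool" where
  "is_subfield K \<longleftrightarrow> 0 \<in> K \<and> 1 \<in> K \<and>
     (\<forall>x\<in>K. \<forall>y\<in>K. x + y \<in> K \<and> x * y \<in> K) \<and>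
     (\<forall>x\<in>K. - x \<in> K \<and> inverse x \<in> K)"

definition gen_field :: "'a::field set \<Rightarrow> 'a set" where
  "gen_field S = \<Inter>{M. is_subfield M \<and> S \<subseteq> M}"

definition coeffs_in :: "'a::field poly \<Rightarrow> 'a set \<Rightarrow> bool" where
  "coeffs_in p K \<longleftrightarrow> (\<forall>i. coeff p i \<in> K)"

definition irreducible_over :: "'a::field set \<Rightarrow> 'a poly \<Rightarrow> bool" where
  "irreducible_over K p \<longleftrightarrow> coeffs_in p K \<and> degree p \<ge> 1 \<and>
     \<not> (\<exists>q r. coeffs_in q K \<and> coeffs_in r K \<and> degree q \<ge> 1 \<and> degree r \<ge> 1 \<and> p = q * r)"

definition splits_distinct_in :: "'a::field set \<Rightarrow> 'a poly \<Rightarrow> bool" where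
  "splits_distinct_in M p \<longleftrightarrow>
     (\<exists>rs. set rs \<subseteq> M \<and> distinct rs \<and> p = smult (lead_coeff p) (\<Prod>r\<leftarrow>rs. [:- r, 1:]))"

text \<open>M is Galois over K: M is an (algebraic) extension of K such that the minimal
polynomial over K of every element of M splits into distinct linear factors in M
(normal and separable).\<close>
definition galois_over :: "'a::field set \<Rightarrow> 'a set \<Rightarrow> bool" where
  "galois_over K M \<longleftrightarrow> is_subfield K \<and> is_subfield M \<and> K \<subseteq> M \<and>
     (\<forall>x\<in>M. \<exists>p. irreducible_over K p \<and> poly p x = 0 \<and> splits_distinct_in M p)"

definition quadratic_ext :: "'a::field set \<Rightarrow> 'a set \<Rightarrow> bool" where
  "quadratic_ext K M \<longleftrightarrow> is_subfield K \<and> is_subfield M \<and> K \<subseteq> M \<and>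
     (\<exists>b1\<in>M. \<exists>b2\<in>M. \<forall>m\<in>M. \<exists>!(k1, k2). k1 \<in> K \<and> k2 \<in> K \<and> m = k1 * b1 + k2 * b2)"

text \<open>tower K n is K^(n+1) of the paper: tower K 0 = K and tower K (n+1) is the
compositum of all quadratic extensions of tower K n which are Galois over K.\<close>
primrec tower :: "'a::field set \<Rightarrow> nat \<Rightarrow> 'a set" where
  "tower K 0 = K"
| "tower K (Suc n) =
     gen_field (tower K n \<union> \<Union>{E. quadratic_ext (tower K n) E \<and> galois_over K E})"

definition Kup :: "'a::field set \<Rightarrow> nat \<Rightarrow> 'a set" where
  "Kup K n = tower K (n - 1)"

definition quadratically_closed :: "'a::field set \<Rightarrow> bool" where
  "quadratically_closed M \<longleftrightarrow> (\<forall>x\<in>M. \<exists>y\<in>M. y * y = x)"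

definition is_quadratic_closure_of :: "'a::field set \<Rightarrow> bool" where
  "is_quadratic_closure_of F \<longleftrightarrow> is_subfield F \<and> quadratically_closed (UNIV :: 'a set) \<and>
     (\<forall>M. is_subfield M \<and> F \<subseteq> M \<and> quadratically_closed M \<longrightarrow> M = UNIV)"

end

theory Submission
  imports Defs "HOL-Computational_Algebra.Polynomial_Factorial"
begin


lemma sf_basic:
  assumes "is_subfield K"
  shows "0 \<in> K" "1 \<in> K" "x \<in> K \<Longrightarrow> y \<in> K \<Longrightarrow> x + y \<in> K"
    "x \<in> K \<Longrightarrow> y \<in> K \<Longrightarrow> x * y \<in> K" "x \<in> K \<Longrightarrow> - x \<in> K"
    "x \<in> K \<Longrightarrow> inverse x \<in> K"
    "x \<in> K \<Longrightarrow> y \<in> K \<Longrightarrow> x - y \<in> K"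
    "x \<in> K \<Longrightarrow> y \<in> K \<Longrightarrow> x / y \<in> K"
  using assms unfolding is_subfield_def diff_conv_add_uminus divide_inverse
  by blast+


lemma sf_num: assumes "is_subfield K" shows "(2::'a::field) \<in> K"
  using sf_basic(3)[OF assms sf_basic(2)[OF assms] sf_basic(2)[OF assms]] by simp

lemma gen_field_sub: "is_subfield M \<Longrightarrow> S \<subseteq> M \<Longrightarrow> gen_field S \<subseteq> M"
  unfolding gen_field_def by blast

lemma gen_field_sup: "S \<subseteq> gen_field S"
  unfolding gen_field_def by blast


lemma gen_field_subfield: "is_subfield (gen_field S)"
  unfolding is_subfield_def
proof (intro conjI ballI)
  show "0 \<in> gen_field S" "1 \<in> gen_field S" unfolding gen_field_def using sf_basic(1,2) by auto
  fix x y assume x: "x \<in> gen_field S" and y: "y \<in> gen_field S"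
  show "x + y \<in> gen_field S" using x y unfolding gen_field_def by (blast intro: sf_basic(3))
  show "x * y \<in> gen_field S" using x y unfolding gen_field_def by (blast intro: sf_basic(4))
  show "- x \<in> gen_field S" using x unfolding gen_field_def by (blast intro: sf_basic(5))
  show "inverse x \<in> gen_field S" using x unfolding gen_field_def by (blast intro: sf_basic(6))
qed

lemma sq_eq_cases: "(y::'a::field) * y = z * z \<Longrightarrow> y = z \<or> y = - z"
proof -
  assume "y * y = z * z"
  then have "(y - z) * (y + z) = 0" by (simp add: algebra_simps)
  then show ?thesis by (auto simp: add_eq_0_iff)
qed

definition adj :: "'a::field set \<Rightarrow> 'a \<Rightarrow> 'a set" where
  "adj K r = {a + b * r | a b. a \<in> K \<and> b \<in> K}"

lemma adj_mem: "a \<in> K \<Longrightarrow> b \<in> K \<Longrightarrow> a + b * r \<in> adj K r"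
  unfolding adj_def by blast

lemma adj_sup: assumes "is_subfield K" shows "K \<subseteq> adj K r" "r \<in> adj K r"
proof -
  show "K \<subseteq> adj K r"
  proof
    fix x assume "x \<in> K" then show "x \<in> adj K r" using adj_mem[of x K 0 r] sf_basic(1)[OF assms] by simp
  qed
  show "r \<in> adj K r" using adj_mem[of 0 K 1 r] sf_basic(1,2)[OF assms] by simp
qed

lemma adj_in_K: assumes "is_subfield K" "r \<in> K" shows "adj K r = K"
proof
  show "adj K r \<subseteq> K" unfolding adj_def using sf_basic[OF assms(1)] assms(2) by auto
  show "K \<subseteq> adj K r" by (rule adj_sup(1)[OF assms(1)])
qed

lemma adj_unique:
  assumes "is_subfield K" "r \<notin> K" "a \<in> K" "b \<in> K" "c \<in> K" "d \<in> K"
    and "a + b * r = c + d * r"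
  shows "a = c \<and> b = d"
proof (cases "b = d")
  case True then show ?thesis using assms(7) by simp
next
  case False
  then have "r = (c - a) / (b - d)" using assms(7)
  proof -
    have "(b - d) * r = c - a" using assms(7) by (simp add: algebra_simps)
    then show ?thesis using False by (simp add: field_simps)
  qed
  then have "r \<in> K" using sf_basic[OF assms(1)] assms(3-6) by simp
  then show ?thesis using assms(2) by simp
qed

lemma adj_subfield:
  assumes K: "is_subfield K" and rr: "r * r \<in> K"
  shows "is_subfield (adj K r)"
proof (cases "r \<in> K")
  case True then show ?thesis using adj_in_K[OF K] K by simp
next
  case rK: False
  note S = sf_basic[OF K]
  show ?thesis unfolding is_subfield_def
  proof (intro conjI ballI)
    show "0 \<in> adj K r" "1 \<in> adj K r" using adj_sup(1)[OF K] S(1,2) by auto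
    fix x y assume x: "x \<in> adj K r" and y: "y \<in> adj K r"
    then obtain a b c d where ab: "a \<in> K" "b \<in> K" "x = a + b * r" and cd: "c \<in> K" "d \<in> K" "y = c + d * r"
      unfolding adj_def by blast
    have "x + y = (a + c) + (b + d) * r" using ab cd by (simp add: algebra_simps)
    then show "x + y \<in> adj K r" using adj_mem[OF S(3)[OF ab(1) cd(1)] S(3)[OF ab(2) cd(2)]] by simp
    have "x * y = (a * c + b * d * (r * r)) + (a * d + b * c) * r" using ab cd by (simp add: algebra_simps)
    moreover have "a * c + b * d * (r * r) \<in> K" "a * d + b * c \<in> K" using S ab cd rr by auto
    ultimately show "x * y \<in> adj K r" using adj_mem by metis
    have "- x = (- a) + (- b) * r" using ab by simp
    then show "- x \<in> adj K r" using adj_mem[OF S(5)[OF ab(1)] S(5)[OF ab(2)]] by simp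
    show "inverse x \<in> adj K r"
    proof (cases "x = 0")
      case True then show ?thesis using adj_sup(1)[OF K] S(1) by auto
    next
      case False
      define D where "D = a * a - b * b * (r * r)"
      have D0: "D \<noteq> 0"
      proof
        assume D: "D = 0"
        show False
        proof (cases "b = 0")
          case True then show False using D False ab unfolding D_def by simp
        next
          case b0: False
          have "a * a = b * b * (r * r)" using D unfolding D_def by simp
          then have "(a / b) * (a / b) = r * r" using b0 by (simp add: divide_simps)
          then have "r = a / b \<or> r = - (a / b)" using sq_eq_cases by metis
          moreover have "a / b \<in> K" "- (a / b) \<in> K" using S ab by auto
          ultimately have "r \<in> K" by auto
          then show False using rK by simp
        qed
      qed
      have "x * (a - b * r) = D" using ab unfolding D_def by (simp add: algebra_simps)
      then have "x * ((a / D) + (- b / D) * r) = 1" using D0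
        by (simp add: divide_simps algebra_simps)
      then have "inverse x = (a / D) + (- b / D) * r" by (metis inverse_unique)
      moreover have "D \<in> K" unfolding D_def using S ab rr by simp
      ultimately have "a / D \<in> K" "- b / D \<in> K" using S ab by auto
      then show ?thesis using adj_mem \<open>inverse x = _\<close> by metis
    qed
  qed
qed

lemma adj_least: "is_subfield M \<Longrightarrow> K \<subseteq> M \<Longrightarrow> r \<in> M \<Longrightarrow> adj K r \<subseteq> M"
proof
  fix x assume "is_subfield M" "K \<subseteq> M" "r \<in> M" "x \<in> adj K r"
  then show "x \<in> M" unfolding adj_def using sf_basic(3,4) by blast
qed


fun qt :: "'a::field set \<Rightarrow> 'a list \<Rightarrow> 'a set" where
  "qt F [] = F"
| "qt F (r # rs) = adj (qt F rs) r"

fun tok :: "'a::field set \<Rightarrow> 'a list \<Rightarrow> bool" where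
  "tok F [] = True"
| "tok F (r # rs) = (tok F rs \<and> r * r \<in> qt F rs)"

lemma qt_subfield: "is_subfield F \<Longrightarrow> tok F rs \<Longrightarrow> is_subfield (qt F rs)"
  by (induction rs) (auto intro: adj_subfield)

lemma qt_F: "is_subfield F \<Longrightarrow> tok F rs \<Longrightarrow> F \<subseteq> qt F rs"
proof (induction rs)
  case Nil then show ?case by simp
next
  case (Cons r rs)
  then show ?case using adj_sup(1)[OF qt_subfield[OF Cons.prems(1)], of rs r] by auto
qed

lemma qt_suffix: "is_subfield F \<Longrightarrow> tok F (xs @ rs) \<Longrightarrow> qt F rs \<subseteq> qt F (xs @ rs)"
proof (induction xs)
  case Nil then show ?case by simp
next
  case (Cons x xs)
  then show ?case using adj_sup(1)[OF qt_subfield[OF Cons.prems(1)], of "xs @ rs" x] by auto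
qed

lemma qt_least: "is_subfield M \<Longrightarrow> F \<subseteq> M \<Longrightarrow> set rs \<subseteq> M \<Longrightarrow> qt F rs \<subseteq> M"
  by (induction rs) (simp, metis adj_least insert_subset list.simps(15) qt.simps(2) subsetD)

lemma qt_gens: "is_subfield F \<Longrightarrow> tok F rs \<Longrightarrow> set rs \<subseteq> qt F rs"
proof (induction rs)
  case Nil then show ?case by simp
next
  case (Cons r rs)
  have S: "is_subfield (qt F rs)" using qt_subfield Cons.prems by auto
  show ?case using adj_sup[OF S, of r] Cons by auto
qed

lemma tok_append: "is_subfield F \<Longrightarrow> tok F ys \<Longrightarrow> (\<forall>x\<in>set xs. x * x \<in> qt F ys) \<Longrightarrow> tok F (xs @ ys)"
proof (induction xs)
  case Nil then show ?case by simp
next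
  case (Cons x xs)
  then have "tok F (xs @ ys)" by simp
  moreover have "qt F ys \<subseteq> qt F (xs @ ys)" using qt_suffix Cons.prems(1) calculation by blast
  ultimately show ?case using Cons.prems by auto
qed

lemma tok_F: "is_subfield F \<Longrightarrow> (\<forall>x\<in>set rs. x * x \<in> F) \<Longrightarrow> tok F rs"
proof (induction rs)
  case Nil then show ?case by simp
next
  case (Cons r rs)
  then have "tok F rs" by simp
  then show ?case using Cons qt_F by auto
qed

definition emb :: "'a::field set \<Rightarrow> 'a set \<Rightarrow> ('a \<Rightarrow> 'a) \<Rightarrow> bool" where
  "emb F K t \<longleftrightarrow> (\<forall>x\<in>F. t x = x) \<and> (\<forall>x\<in>K. \<forall>y\<in>K. t (x + y) = t x + t y \<and> t (x * y) = t x * t y)"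

context
  fixes F K :: "'a::field set" and t :: "'a \<Rightarrow> 'a"
  assumes F: "is_subfield F" and K: "is_subfield K" and FK: "F \<subseteq> K" and t: "emb F K t"
begin

lemma emb_add: "x \<in> K \<Longrightarrow> y \<in> K \<Longrightarrow> t (x + y) = t x + t y"
  using t unfolding emb_def by blast

lemma emb_mult: "x \<in> K \<Longrightarrow> y \<in> K \<Longrightarrow> t (x * y) = t x * t y"
  using t unfolding emb_def by blast

lemma emb_F: "x \<in> F \<Longrightarrow> t x = x"
  using t unfolding emb_def by blast

lemma emb_0: "t 0 = 0" using emb_F sf_basic(1)[OF F] by simp
lemma emb_1: "t 1 = 1" using emb_F sf_basic(2)[OF F] by simp

lemma emb_neg: "x \<in> K \<Longrightarrow> t (- x) = - t x"
proof -
  assume x: "x \<in> K"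
  have "t (x + - x) = t x + t (- x)" using emb_add x sf_basic(5)[OF K x] by blast
  then show ?thesis using emb_0 by (simp add: eq_neg_iff_add_eq_0 add.commute)
qed

lemma emb_diff: "x \<in> K \<Longrightarrow> y \<in> K \<Longrightarrow> t (x - y) = t x - t y"
  using emb_add[of x "- y"] emb_neg[of y] sf_basic(5)[OF K] by simp

lemma emb_nz: "x \<in> K \<Longrightarrow> x \<noteq> 0 \<Longrightarrow> t x \<noteq> 0"
proof
  assume x: "x \<in> K" "x \<noteq> 0" "t x = 0"
  have "t (x * inverse x) = t x * t (inverse x)" using emb_mult x sf_basic(6)[OF K] by blast
  then show False using x emb_1 by simp
qed

lemma emb_inj: "x \<in> K \<Longrightarrow> y \<in> K \<Longrightarrow> t x = t y \<Longrightarrow> x = y"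
  using emb_diff emb_nz sf_basic(7)[OF K] by force

lemma emb_inj_on: "inj_on t K"
  using emb_inj by (auto simp: inj_on_def)

end


lemma emb_mono: "emb F K t \<Longrightarrow> K' \<subseteq> K \<Longrightarrow> emb F K' t"
  unfolding emb_def by blast

lemma emb_id: "emb F K id"
  unfolding emb_def by simp

lemma emb_comp: "emb F K t \<Longrightarrow> t ` K \<subseteq> K2 \<Longrightarrow> emb F K2 p \<Longrightarrow> F \<subseteq> K \<Longrightarrow> emb F K (p \<circ> t)"
  unfolding emb_def by (auto simp: subset_iff)


lemma emb_image_qt:
  assumes F: "is_subfield F" and M: "is_subfield M" "F \<subseteq> M"
  shows "tok F rs \<Longrightarrow> emb F (qt F rs) t \<Longrightarrow> t ` set rs \<subseteq> M \<Longrightarrow> t ` qt F rs \<subseteq> M"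
proof (induction rs)
  case Nil
  have "emb F F t" using Nil(2) by simp
  then have "\<And>x. x \<in> F \<Longrightarrow> t x = x" using emb_F[OF F F order_refl] by blast
  then show ?case using M by auto
next
  case (Cons r rs)
  let ?K = "qt F rs"
  have K: "is_subfield ?K" using qt_subfield F Cons.prems by auto
  have K2: "is_subfield (qt F (r # rs))" using qt_subfield F Cons.prems(1) by blast
  have FK2: "F \<subseteq> qt F (r # rs)" using qt_F F Cons.prems(1) by blast
  have sub: "?K \<subseteq> qt F (r # rs)" using adj_sup(1)[OF K] by simp
  have rin: "r \<in> qt F (r # rs)" using adj_sup(2)[OF K] by simp
  have IH: "t ` ?K \<subseteq> M" using Cons emb_mono[OF Cons.prems(2) sub] by auto
  show ?case
  proof
    fix z assume "z \<in> t ` qt F (r # rs)"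
    then obtain y where y: "y \<in> adj ?K r" "z = t y" by auto
    then obtain a b where ab: "a \<in> ?K" "b \<in> ?K" "y = a + b * r" unfolding adj_def by blast
    have "t y = t a + t b * t r"
      using ab sub rin emb_add[OF F K2 FK2 Cons.prems(2)] emb_mult[OF F K2 FK2 Cons.prems(2)]
        sf_basic(4)[OF K2] by (metis subsetD)
    moreover have "t a \<in> M" "t b \<in> M" using IH ab by auto
    moreover have "t r \<in> M" using Cons.prems(3) by simp
    ultimately show "z \<in> M" using y sf_basic[OF M(1)] by simp
  qed
qed

lemma emb_ext:
  assumes F: "is_subfield F" and tk: "tok F (r # rs)" and rK: "r \<notin> qt F rs"
    and t: "emb F (qt F rs) t" and r': "r' * r' = t (r * r)"
  shows "\<exists>t'. emb F (qt F (r # rs)) t' \<and> t' r = r' \<and> (\<forall>x\<in>qt F rs. t' x = t x)"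
proof -
  let ?K = "qt F rs"
  have K: "is_subfield ?K" using qt_subfield F tk by auto
  have FK: "F \<subseteq> ?K" using qt_F F tk by auto
  have rr: "r * r \<in> ?K" using tk by simp
  define c where "c y = (SOME p. fst p \<in> ?K \<and> snd p \<in> ?K \<and> y = fst p + snd p * r)" for y
  define t' where "t' y = t (fst (c y)) + t (snd (c y)) * r'" for y
  have key: "t' (a + b * r) = t a + t b * r'" if "a \<in> ?K" "b \<in> ?K" for a b
  proof -
    have "\<exists>p. fst p \<in> ?K \<and> snd p \<in> ?K \<and> a + b * r = fst p + snd p * r"
      using that by (intro exI[of _ "(a, b)"]) simp
    then have "fst (c (a + b * r)) \<in> ?K \<and> snd (c (a + b * r)) \<in> ?K \<and>
        a + b * r = fst (c (a + b * r)) + snd (c (a + b * r)) * r"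
      unfolding c_def by (rule someI_ex)
    then have "fst (c (a + b * r)) = a \<and> snd (c (a + b * r)) = b"
      using adj_unique[OF K rK] that by metis
    then show ?thesis unfolding t'_def by simp
  qed
  note S = sf_basic[OF K]
  note E = emb_add[OF F K FK t] emb_mult[OF F K FK t]
  have emb': "emb F (qt F (r # rs)) t'"
    unfolding emb_def
  proof (intro conjI ballI)
    fix x assume "x \<in> F"
    then show "t' x = x" using key[of x 0] FK S(1) emb_F[OF F K FK t] emb_0[OF F K FK t] by auto
  next
    fix x y assume "x \<in> qt F (r # rs)" "y \<in> qt F (r # rs)"
    then obtain a b c d where ab: "a \<in> ?K" "b \<in> ?K" "x = a + b * r" and cd: "c \<in> ?K" "d \<in> ?K" "y = c + d * r"
      unfolding qt.simps adj_def by blast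
    have eq: "x + y = (a + c) + (b + d) * r" using ab cd by (simp add: algebra_simps)
    have "t' (x + y) = t (a + c) + t (b + d) * r'" unfolding eq by (rule key) (use S ab cd in auto)
    also have "\<dots> = t' x + t' y" using key ab cd E by (simp add: algebra_simps)
    finally show "t' (x + y) = t' x + t' y" .
    have eq2: "x * y = (a * c + b * d * (r * r)) + (a * d + b * c) * r" using ab cd by (simp add: algebra_simps)
    have "t' (x * y) = t (a * c + b * d * (r * r)) + t (a * d + b * c) * r'" unfolding eq2 by (rule key) (use S ab cd rr in auto)
    also have "\<dots> = (t a * t c + t b * t d * (r' * r')) + (t a * t d + t b * t c) * r'"
      using E S ab cd rr r' by simp
    also have "\<dots> = t' x * t' y" using key ab cd by (simp add: algebra_simps)
    finally show "t' (x * y) = t' x * t' y" .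
  qed
  have "t' r = r'" using key[of 0 1] S emb_0[OF F K FK t] emb_1[OF F K FK t] by simp
  moreover have "\<forall>x\<in>?K. t' x = t x" using key[of _ 0] S emb_0[OF F K FK t] by auto
  ultimately show ?thesis using emb' by blast
qed


lemma fixed_F:
  fixes F :: "'a::field set"
  assumes F: "is_subfield F" and two: "(2::'a::field) \<noteq> 0" and qc: "\<forall>x::'a. \<exists>y. y * y = x"
  shows "tok F rs \<Longrightarrow> x \<in> qt F rs \<Longrightarrow> (\<forall>t. emb F (qt F rs) t \<longrightarrow> t x = x) \<Longrightarrow> x \<in> F"
proof (induction rs arbitrary: x)
  case Nil then show ?case by simp
next
  case (Cons r rs)
  let ?K = "qt F rs"
  have K: "is_subfield ?K" using qt_subfield F Cons.prems by auto
  have FK: "F \<subseteq> ?K" using qt_F F Cons.prems by auto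
  have tk: "tok F rs" using Cons.prems by simp
  show ?case
  proof (cases "r \<in> ?K")
    case True
    then have "qt F (r # rs) = ?K" using adj_in_K[OF K] by simp
    then show ?thesis using Cons.IH[OF tk] Cons.prems by simp
  next
    case rK: False
    obtain a b where ab: "a \<in> ?K" "b \<in> ?K" "x = a + b * r" using Cons.prems(2) unfolding qt.simps adj_def by blast
    have "(- r) * (- r) = id (r * r)" by simp
    then obtain t1 where t1: "emb F (qt F (r # rs)) t1" "t1 r = - r" "\<forall>y\<in>?K. t1 y = id y"
      using emb_ext[OF F Cons.prems(1) rK emb_id] by blast
    have K2: "is_subfield (qt F (r # rs))" using qt_subfield F Cons.prems(1) by blast
    have FK2: "F \<subseteq> qt F (r # rs)" using qt_F F Cons.prems(1) by blast
    have sub: "?K \<subseteq> qt F (r # rs)" using adj_sup(1)[OF K] by simp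
    have rin: "r \<in> qt F (r # rs)" using adj_sup(2)[OF K] by simp
    have "t1 x = t1 a + t1 b * t1 r"
      using ab sub rin emb_add[OF F K2 FK2 t1(1)] emb_mult[OF F K2 FK2 t1(1)] sf_basic(4)[OF K2] by (metis subsetD)
    then have "t1 x = a - b * r" using t1 ab by simp
    then have "a - b * r = a + b * r" using Cons.prems(3) t1(1) ab(3) by metis
    then have "2 * (b * r) = 0" by (simp add: algebra_simps)
    moreover have "r \<noteq> 0" using rK sf_basic(1)[OF K] by auto
    ultimately have b0: "b = 0" using two by simp
    have "\<forall>t. emb F ?K t \<longrightarrow> t a = a"
    proof (intro allI impI)
      fix t assume t: "emb F ?K t"
      obtain r' where r': "r' * r' = t (r * r)" using qc by blast
      obtain t2 where t2: "emb F (qt F (r # rs)) t2" "\<forall>y\<in>?K. t2 y = t y"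
        using emb_ext[OF F Cons.prems(1) rK t r'] by blast
      have "t2 x = x" using Cons.prems(3) t2(1) by blast
      then show "t a = a" using t2(2) ab b0 by simp
    qed
    then have "a \<in> F" using Cons.IH[OF tk ab(1)] by blast
    then show ?thesis using ab b0 by simp
  qed
qed


lemma sum_in_sf: "is_subfield K \<Longrightarrow> (\<And>i. i \<in> S \<Longrightarrow> f i \<in> K) \<Longrightarrow> sum f S \<in> K"
proof (induction S rule: infinite_finite_induct)
  case (infinite A) then show ?case using sf_basic(1) by simp
next
  case empty then show ?case using sf_basic(1) by simp
next
  case (insert x F) then show ?case using sf_basic(3)[of K] by simp
qed

lemma ci_add: "is_subfield K \<Longrightarrow> coeffs_in p K \<Longrightarrow> coeffs_in q K \<Longrightarrow> coeffs_in (p + q) K"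
  unfolding coeffs_in_def using sf_basic(3)[of K] by simp
lemma ci_diff: "is_subfield K \<Longrightarrow> coeffs_in p K \<Longrightarrow> coeffs_in q K \<Longrightarrow> coeffs_in (p - q) K"
  unfolding coeffs_in_def using sf_basic(7)[of K] by simp
lemma ci_smult: "is_subfield K \<Longrightarrow> c \<in> K \<Longrightarrow> coeffs_in q K \<Longrightarrow> coeffs_in (smult c q) K"
  unfolding coeffs_in_def using sf_basic(4)[of K] by simp
lemma ci_mult: "is_subfield K \<Longrightarrow> coeffs_in p K \<Longrightarrow> coeffs_in q K \<Longrightarrow> coeffs_in (p * q) K"
  unfolding coeffs_in_def coeff_mult using sf_basic(4)[of K] by (auto intro!: sum_in_sf)
lemma ci_0: "is_subfield K \<Longrightarrow> coeffs_in 0 K"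
  unfolding coeffs_in_def using sf_basic(1)[of K] by simp
lemma ci_pCons: "coeffs_in (pCons a p) K \<longleftrightarrow> a \<in> K \<and> coeffs_in p K"
  unfolding coeffs_in_def
  by (metis coeff_pCons_0 coeff_pCons_Suc not0_implies_Suc)
lemma ci_mono: "coeffs_in p K \<Longrightarrow> K \<subseteq> M \<Longrightarrow> coeffs_in p M"
  unfolding coeffs_in_def by auto

lemma decomp:
  assumes K: "is_subfield K"
  shows "coeffs_in Q (adj K r) \<Longrightarrow> \<exists>A B. coeffs_in A K \<and> coeffs_in B K \<and> Q = A + smult r B"
proof (induction Q rule: pCons_induct)
  case 0 then show ?case using ci_0[OF K] by (intro exI[of _ 0]) simp
next
  case (pCons c Q)
  then have c: "c \<in> adj K r" and Q: "coeffs_in Q (adj K r)" using ci_pCons by auto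
  obtain A B where AB: "coeffs_in A K" "coeffs_in B K" "Q = A + smult r B" using pCons Q by blast
  obtain a b where ab: "a \<in> K" "b \<in> K" "c = a + b * r" using c unfolding adj_def by blast
  have "pCons c Q = pCons a A + smult r (pCons b B)" using AB ab by (simp add: algebra_simps)
  moreover have "coeffs_in (pCons a A) K" "coeffs_in (pCons b B) K" using ci_pCons AB ab by auto
  ultimately show ?case by blast
qed

lemma alg:
  fixes F :: "'a::field set"
  assumes F: "is_subfield F"
  shows "tok F rs \<Longrightarrow> coeffs_in Q (qt F rs) \<Longrightarrow> Q \<noteq> 0 \<Longrightarrow> \<exists>Q'. coeffs_in Q' F \<and> Q' \<noteq> 0 \<and> Q dvd Q'"
proof (induction rs arbitrary: Q)
  case Nil then show ?case by auto
next
  case (Cons r rs)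
  let ?K = "qt F rs"
  have K: "is_subfield ?K" using qt_subfield F Cons.prems by auto
  have tk: "tok F rs" using Cons.prems by simp
  have rr: "r * r \<in> ?K" using Cons.prems by simp
  show ?case
  proof (cases "r \<in> ?K")
    case True
    then have "qt F (r # rs) = ?K" using adj_in_K[OF K] by simp
    then show ?thesis using Cons.IH[OF tk] Cons.prems by simp
  next
    case rK: False
    obtain A B where AB: "coeffs_in A ?K" "coeffs_in B ?K" "Q = A + smult r B"
      using decomp[OF K, of Q r] Cons.prems(2) by auto
    let ?Qb = "A - smult r B"
    have Qb0: "?Qb \<noteq> 0"
    proof
      assume "?Qb = 0"
      then have eqA: "A = smult r B" by simp
      have "B = 0"
      proof (rule ccontr)
        assume "B \<noteq> 0"
        then obtain i where i: "coeff B i \<noteq> 0" by (metis leading_coeff_0_iff)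
        have "coeff A i = r * coeff B i" using eqA by simp
        then have "r = coeff A i / coeff B i" using i by (simp add: field_simps)
        then have "r \<in> ?K" using sf_basic(8)[OF K] AB(1,2) unfolding coeffs_in_def by simp
        then show False using rK by simp
      qed
      then show False using eqA AB(3) Cons.prems(3) by simp
    qed
    have prod: "Q * ?Qb = A * A - smult (r * r) (B * B)" using AB(3) by (simp add: algebra_simps)
    have "coeffs_in (Q * ?Qb) ?K" unfolding prod
      using ci_diff[OF K] ci_mult[OF K] ci_smult[OF K] AB rr by metis
    moreover have "Q * ?Qb \<noteq> 0" using Qb0 Cons.prems(3) by simp
    ultimately obtain Q' where "coeffs_in Q' F" "Q' \<noteq> 0" "Q * ?Qb dvd Q'" using Cons.IH[OF tk] by blast
    then show ?thesis using dvd_mult_left by blast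
  qed
qed


lemma poly_in: "is_subfield K \<Longrightarrow> coeffs_in p K \<Longrightarrow> y \<in> K \<Longrightarrow> poly p y \<in> K"
proof (induction p rule: pCons_induct)
  case 0 then show ?case using sf_basic(1) by simp
next
  case (pCons a p)
  then have a: "a \<in> K" and p: "coeffs_in p K" using ci_pCons by auto
  have "poly p y \<in> K" using pCons.IH[OF pCons.prems(1) p pCons.prems(3)] .
  then show ?case using a pCons.prems sf_basic(3,4)[of K] by simp
qed

lemma emb_poly:
  assumes F: "is_subfield F" and K: "is_subfield K" and FK: "F \<subseteq> K" and t: "emb F K t"
  shows "coeffs_in p F \<Longrightarrow> y \<in> K \<Longrightarrow> t (poly p y) = poly p (t y)"
proof (induction p rule: pCons_induct)
  case 0 then show ?case using emb_0[OF F K FK t] by simp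
next
  case (pCons a p)
  have a: "a \<in> F" and p: "coeffs_in p F" using pCons.prems ci_pCons by auto
  have pin: "poly p y \<in> K" using poly_in[OF K ci_mono[OF p FK] pCons.prems(2)] .
  have "t (poly (pCons a p) y) = t a + t y * t (poly p y)"
    using emb_add[OF F K FK t] emb_mult[OF F K FK t] a FK pin pCons.prems(2) sf_basic(4)[OF K] by auto
  then show ?case using pCons.IH[OF p pCons.prems(2)] emb_F[OF F K FK t a] by simp
qed

lemma img_finite:
  fixes F :: "'a::field set"
  assumes F: "is_subfield F" and tk: "tok F rs" and x: "x \<in> qt F rs"
  shows "finite {t x | t. emb F (qt F rs) t}"
proof -
  let ?K = "qt F rs"
  have K: "is_subfield ?K" using qt_subfield F tk by auto
  have FK: "F \<subseteq> ?K" using qt_F F tk by auto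
  have "coeffs_in [:-x, 1:] ?K" using x sf_basic[OF K] unfolding coeffs_in_def
    by (auto simp: coeff_pCons split: nat.split)
  then obtain Q' where Q': "coeffs_in Q' F" "Q' \<noteq> 0" "[:-x, 1:] dvd Q'"
    using alg[OF F tk] by fastforce
  have "poly Q' x = 0" using Q'(3) by (simp add: poly_eq_0_iff_dvd)
  have "{t x | t. emb F ?K t} \<subseteq> {z. poly Q' z = 0}"
  proof
    fix z assume "z \<in> {t x | t. emb F ?K t}"
    then obtain t where t: "emb F ?K t" "z = t x" by blast
    have "poly Q' z = t (poly Q' x)" using emb_poly[OF F K FK t(1) Q'(1) x] t by simp
    then show "z \<in> {z. poly Q' z = 0}" using \<open>poly Q' x = 0\<close> emb_0[OF F K FK t(1)] by simp
  qed
  moreover have "finite {z. poly Q' z = 0}" using poly_roots_finite[OF Q'(2)] .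
  ultimately show ?thesis by (rule finite_subset)
qed



lemma cover:
  fixes F :: "'a::field set"
  assumes F: "is_subfield F"
  shows "tok F rs \<Longrightarrow> \<exists>rs2. tok F rs2 \<and> (\<forall>t. emb F (qt F rs) t \<longrightarrow> t ` qt F rs \<subseteq> qt F rs2)"
proof (induction rs)
  case Nil
  have "\<forall>t. emb F F t \<longrightarrow> t ` F \<subseteq> F"
  proof (intro allI impI subsetI)
    fix t z assume t: "emb F F t" and "z \<in> t ` F"
    then obtain y where "y \<in> F" "z = t y" by auto
    then show "z \<in> F" using emb_F[OF F F order_refl t] by simp
  qed
  then show ?case by (intro exI[of _ "[]"]) simp
next
  case (Cons r rs)
  have tk: "tok F rs" using Cons.prems by simp
  obtain rs0 where rs0: "tok F rs0" "\<forall>t. emb F (qt F rs) t \<longrightarrow> t ` qt F rs \<subseteq> qt F rs0"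
    using Cons.IH[OF tk] by blast
  let ?K = "qt F rs"
  have K: "is_subfield ?K" using qt_subfield F tk by auto
  have sub: "?K \<subseteq> qt F (r # rs)" using adj_sup(1)[OF K] by simp
  have rin: "r \<in> qt F (r # rs)" using adj_sup(2)[OF K] by simp
  have rr: "r * r \<in> ?K" using Cons.prems by simp
  have K2: "is_subfield (qt F (r # rs))" using qt_subfield F Cons.prems(1) by blast
  have FK2: "F \<subseteq> qt F (r # rs)" using qt_F F Cons.prems(1) by blast
  let ?C = "{t r | t. emb F (qt F (r # rs)) t}"
  have "finite ?C" using img_finite[OF F Cons.prems rin] .
  from finite_list[OF this] obtain cl where cl: "set cl = ?C" ..
  have "\<forall>c\<in>set cl. c * c \<in> qt F rs0"
  proof
    fix c assume "c \<in> set cl"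
    then obtain t where t: "emb F (qt F (r # rs)) t" "c = t r" using cl by auto
    have "c * c = t (r * r)" using emb_mult[OF F K2 FK2 t(1) rin rin] t(2) by simp
    moreover have "emb F ?K t" using emb_mono[OF t(1) sub] .
    then have "t ` ?K \<subseteq> qt F rs0" using rs0(2) by blast
    ultimately show "c * c \<in> qt F rs0" using rr by (metis image_subset_iff)
  qed
  then have tk2: "tok F (cl @ rs0)" by (rule tok_append[OF F rs0(1)])
  have M: "is_subfield (qt F (cl @ rs0))" using qt_subfield[OF F tk2] .
  have FM: "F \<subseteq> qt F (cl @ rs0)" using qt_F[OF F tk2] .
  have s0: "qt F rs0 \<subseteq> qt F (cl @ rs0)" using qt_suffix[OF F tk2] .
  have gens: "set (cl @ rs0) \<subseteq> qt F (cl @ rs0)" using qt_gens[OF F tk2] .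
  have "\<forall>t. emb F (qt F (r # rs)) t \<longrightarrow> t ` qt F (r # rs) \<subseteq> qt F (cl @ rs0)"
  proof (intro allI impI)
    fix t assume t: "emb F (qt F (r # rs)) t"
    have "t r \<in> set cl" using t cl by blast
    then have "t r \<in> qt F (cl @ rs0)" using gens by auto
    moreover have "t ` set rs \<subseteq> qt F (cl @ rs0)"
    proof -
      have "t ` qt F rs \<subseteq> qt F rs0" using rs0(2) emb_mono[OF t sub] by blast
      then show ?thesis using qt_gens[OF F tk] s0 by (meson image_mono order_trans)
    qed
    ultimately have "t ` set (r # rs) \<subseteq> qt F (cl @ rs0)" by simp
    then show "t ` qt F (r # rs) \<subseteq> qt F (cl @ rs0)"
      by (rule emb_image_qt[OF F M FM Cons.prems(1) t])
  qed
  with tk2 show ?case by (intro exI[of _ "cl @ rs0"]) simp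
qed


lemma coeff_lin_mult: "coeff ([:-y, 1:] * p) i = (case i of 0 \<Rightarrow> 0 | Suc j \<Rightarrow> coeff p j) - (y::'a::field) * coeff p i"
proof -
  have "[:-y, 1:] * p = pCons 0 p - smult y p" by (simp add: mult_pCons_left)
  then show ?thesis by (simp add: coeff_pCons split: nat.split)
qed

lemma prod_emb:
  assumes F: "is_subfield F" and K: "is_subfield K" and FK: "F \<subseteq> K" and p: "emb F K p"
  shows "finite Os \<Longrightarrow> Os \<subseteq> K \<Longrightarrow> (\<forall>i. coeff (\<Prod>y\<in>Os. [:-y, 1:]) i \<in> K) \<and>
     (\<forall>i. coeff (\<Prod>y\<in>p ` Os. [:-y, 1:]) i = p (coeff (\<Prod>y\<in>Os. [:-y, 1:]) i))"
proof (induction Os rule: finite_induct)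
  case empty
  show ?case using sf_basic(1,2)[OF K] emb_0[OF F K FK p] emb_1[OF F K FK p]
    by (simp add: coeff_1)
next
  case (insert y Os)
  let ?P = "\<Prod>y\<in>Os. [:-y, 1:]" and ?P' = "\<Prod>y\<in>p ` Os. [:-y, 1:]"
  have yK: "y \<in> K" and OK: "Os \<subseteq> K" using insert.prems by auto
  have IH: "\<forall>i. coeff ?P i \<in> K" "\<forall>i. coeff ?P' i = p (coeff ?P i)" using insert.IH OK by auto
  have ni: "p y \<notin> p ` Os"
  proof
    assume "p y \<in> p ` Os"
    then obtain z where z: "z \<in> Os" "p y = p z" by auto
    then have "y = z" using emb_inj[OF F K FK p yK] OK by auto
    then show False using z(1) insert.hyps(2) by simp
  qed
  have e1: "(\<Prod>y\<in>insert y Os. [:-y, 1:]) = [:-y, 1:] * ?P" using insert.hyps by simp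
  have e2: "(\<Prod>y\<in>p ` insert y Os. [:-y, 1:]) = [:-(p y), 1:] * ?P'" using insert.hyps ni by simp
  have prev: "(case i of 0 \<Rightarrow> 0 | Suc j \<Rightarrow> coeff ?P j) \<in> K" for i
    using IH(1) sf_basic(1)[OF K] by (simp split: nat.split)
  have prev': "(case i of 0 \<Rightarrow> 0 | Suc j \<Rightarrow> coeff ?P' j) = p (case i of 0 \<Rightarrow> 0 | Suc j \<Rightarrow> coeff ?P j)" for i
    using IH(2) emb_0[OF F K FK p] by (simp split: nat.split)
  show ?case
  proof (intro conjI allI)
    fix i
    show "coeff (\<Prod>y\<in>insert y Os. [:-y, 1:]) i \<in> K"
      unfolding e1 coeff_lin_mult using prev IH(1) yK sf_basic(4,7)[OF K] by simp
    have "p (coeff (\<Prod>y\<in>insert y Os. [:-y, 1:]) i) =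
        p (case i of 0 \<Rightarrow> 0 | Suc j \<Rightarrow> coeff ?P j) - p y * p (coeff ?P i)"
      unfolding e1 coeff_lin_mult
      using emb_diff[OF F K FK p] emb_mult[OF F K FK p] prev IH(1) yK sf_basic(4)[OF K] by simp
    then show "coeff (\<Prod>y\<in>p ` insert y Os. [:-y, 1:]) i = p (coeff (\<Prod>y\<in>insert y Os. [:-y, 1:]) i)"
      unfolding e2 coeff_lin_mult using prev' IH(2) by simp
  qed
qed

lemma orbit_poly:
  fixes F :: "'a::field set"
  assumes F: "is_subfield F" and two: "(2::'a) \<noteq> 0" and qc: "\<forall>x::'a. \<exists>y. y * y = x"
    and tk: "tok F rs" and x: "x \<in> qt F rs"
  shows "coeffs_in (\<Prod>y\<in>{t x | t. emb F (qt F rs) t}. [:-y, 1:]) F"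
proof -
  let ?O = "{t x | t. emb F (qt F rs) t}"
  let ?K = "qt F rs"
  have FK: "F \<subseteq> ?K" using qt_F F tk by auto
  obtain rs2 where rs2: "tok F rs2" "\<forall>t. emb F ?K t \<longrightarrow> t ` ?K \<subseteq> qt F rs2"
    using cover[OF F tk] by blast
  let ?K2 = "qt F rs2"
  have K2: "is_subfield ?K2" using qt_subfield[OF F rs2(1)] .
  have FK2: "F \<subseteq> ?K2" using qt_F[OF F rs2(1)] .
  have fin: "finite ?O" using img_finite[OF F tk x] .
  have OK2: "?O \<subseteq> ?K2"
  proof
    fix z assume "z \<in> ?O"
    then obtain t where t: "emb F ?K t" "z = t x" by blast
    have "t ` ?K \<subseteq> ?K2" by (rule rs2(2)[rule_format, OF t(1)])
    then show "z \<in> ?K2" using t(2) x by auto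
  qed
  show ?thesis unfolding coeffs_in_def
  proof
    fix i
    let ?c = "coeff (\<Prod>y\<in>?O. [:-y, 1:]) i"
    have "\<forall>i. coeff (\<Prod>y\<in>?O. [:-y, 1:]) i \<in> ?K2" by (rule conjunct1[OF prod_emb[OF F K2 FK2 emb_id fin OK2]])
    then have cK2: "?c \<in> ?K2" by (rule spec)
    have "\<forall>p. emb F ?K2 p \<longrightarrow> p ?c = ?c"
    proof (intro allI impI)
      fix p assume p: "emb F ?K2 p"
      have "p ` ?O \<subseteq> ?O"
      proof
        fix z assume "z \<in> p ` ?O"
        then obtain t where t: "emb F ?K t" "z = p (t x)" by blast
        have "t ` ?K \<subseteq> ?K2" by (rule rs2(2)[rule_format, OF t(1)])
        then have "emb F ?K (p \<circ> t)" using emb_comp[OF t(1) _ p FK] by simp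
        then show "z \<in> ?O" using t(2) by (metis (mono_tags, lifting) comp_apply mem_Collect_eq)
      qed
      moreover have "inj_on p ?O" by (rule inj_on_subset[OF emb_inj_on[OF F K2 FK2 p] OK2])
      ultimately have "p ` ?O = ?O" using fin by (simp add: endo_inj_surj)
      moreover have "\<forall>i. coeff (\<Prod>y\<in>p ` ?O. [:-y, 1:]) i = p (coeff (\<Prod>y\<in>?O. [:-y, 1:]) i)"
        by (rule conjunct2[OF prod_emb[OF F K2 FK2 p fin OK2]])
      ultimately show "p ?c = ?c" by simp
    qed
    then show "?c \<in> F" using fixed_F[OF F two qc rs2(1) cK2] by blast
  qed
qed


lemma dvd_split:
  fixes p :: "'a::field poly"
  shows "distinct l \<Longrightarrow> p dvd (\<Prod>y\<leftarrow>l. [:-y, 1:]) \<Longrightarrow> p \<noteq> 0 \<Longrightarrow>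
    \<exists>l'. set l' \<subseteq> set l \<and> distinct l' \<and> p = smult (lead_coeff p) (\<Prod>y\<leftarrow>l'. [:-y, 1:])"
proof (induction l arbitrary: p)
  case Nil
  have "p dvd 1" using Nil.prems(2) by simp
  then have "degree p = 0" using is_unit_iff_degree[OF Nil.prems(3)] by blast
  then have "smult (lead_coeff p) (\<Prod>y\<leftarrow>[]. [:-y, 1:]) = [:coeff p 0:]" by simp
  also have "\<dots> = p" using degree_0_id[OF \<open>degree p = 0\<close>] .
  finally have "p = smult (lead_coeff p) (\<Prod>y\<leftarrow>[]. [:-y, 1:])" by (rule sym)
  then show ?case by (intro exI[of _ "[]"] conjI) simp_all
next
  case (Cons y l)
  show ?case
  proof (cases "poly p y = 0")
    case True
    then have "[:-y, 1:] dvd p" by (simp add: poly_eq_0_iff_dvd)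
    then obtain p' where p': "p = [:-y, 1:] * p'" by (rule dvdE)
    have "[:-y, 1:] * p' dvd [:-y, 1:] * (\<Prod>y\<leftarrow>l. [:-y, 1:])" using Cons.prems(2) p' by simp
    then have d': "p' dvd (\<Prod>y\<leftarrow>l. [:-y, 1:])"
      using dvd_times_left_cancel_iff[of "[:-y, 1:]" p'] by simp
    have n': "p' \<noteq> 0" using p' Cons.prems(3) by auto
    have dl: "distinct l" using Cons.prems(1) by simp
    obtain l' where l': "set l' \<subseteq> set l" "distinct l'" "p' = smult (lead_coeff p') (\<Prod>y\<leftarrow>l'. [:-y, 1:])"
      using Cons.IH[OF dl d' n'] by blast
    define c where "c = lead_coeff p'"
    have "lead_coeff p = lead_coeff [:-y, 1:] * lead_coeff p'" unfolding p' by (rule lead_coeff_mult)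
    then have lc: "lead_coeff p = c" unfolding c_def by simp
    have l3: "p' = smult c (\<Prod>y\<leftarrow>l'. [:-y, 1:])" using l'(3) unfolding c_def .
    have "y \<notin> set l'" using l'(1) Cons.prems(1) by auto
    moreover have "p = smult (lead_coeff p) (\<Prod>y\<leftarrow>y # l'. [:-y, 1:])"
    proof -
      have "smult c (\<Prod>y\<leftarrow>y # l'. [:-y, 1:]) = [:-y, 1:] * smult c (\<Prod>y\<leftarrow>l'. [:-y, 1:])" by simp
      also have "\<dots> = p" unfolding p' l3 ..
      finally show ?thesis unfolding lc by (rule sym)
    qed
    moreover have "set (y # l') \<subseteq> set (y # l)" using l'(1) by auto
    ultimately show ?thesis using l'(2) by (intro exI[of _ "y # l'"] conjI) simp_all
  next
    case False
    let ?R = "\<Prod>y\<leftarrow>l. [:-y, 1:]"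
    have "p dvd [:-y, 1:] * ?R" using Cons.prems(2) by simp
    then obtain k where k: "[:-y, 1:] * ?R = p * k" by (rule dvdE)
    have "poly p y * poly k y = 0" using arg_cong[OF k, of "\<lambda>q. poly q y"] by simp
    then have "poly k y = 0" using False by simp
    then have "[:-y, 1:] dvd k" by (simp add: poly_eq_0_iff_dvd)
    then obtain k' where k': "k = [:-y, 1:] * k'" by (rule dvdE)
    have "[:-y, 1:] * ?R = [:-y, 1:] * (p * k')" unfolding k k' by (simp only: ac_simps)
    then have "?R = p * k'" by (simp del: mult_pCons_left)
    then have d': "p dvd ?R" by simp
    have dl: "distinct l" using Cons.prems(1) by simp
    obtain l' where l': "set l' \<subseteq> set l" "distinct l'" "p = smult (lead_coeff p) (\<Prod>y\<leftarrow>l'. [:-y, 1:])"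
      using Cons.IH[OF dl d' Cons.prems(3)] by blast
    have "set l' \<subseteq> set (y # l)" using l'(1) by auto
    then show ?thesis using l'(2,3) by blast
  qed
qed

lemma galois_gen:
  fixes F :: "'a::field set"
  assumes F: "is_subfield F" and two: "(2::'a) \<noteq> 0" and qc: "\<forall>x::'a. \<exists>y. y * y = x"
    and tk: "tok F rs" and M: "is_subfield M" "F \<subseteq> M"
    and imgs: "\<forall>t. emb F (qt F rs) t \<longrightarrow> t ` set rs \<subseteq> M"
    and x: "x \<in> qt F rs"
  shows "\<exists>p. irreducible_over F p \<and> poly p x = 0 \<and> splits_distinct_in M p"
proof -
  let ?O = "{t x | t. emb F (qt F rs) t}"
  let ?P = "\<Prod>y\<in>?O. [:-y, 1:]"
  have cP: "coeffs_in ?P F" by (rule orbit_poly[OF F two qc tk x])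
  have fin: "finite ?O" by (rule img_finite[OF F tk x])
  have xO: "x \<in> ?O" using emb_id[of F "qt F rs"] by (metis (mono_tags, lifting) id_apply mem_Collect_eq)
  have OM: "?O \<subseteq> M"
  proof
    fix z assume "z \<in> ?O"
    then obtain t where t: "emb F (qt F rs) t" "z = t x" by blast
    have "t ` qt F rs \<subseteq> M" by (rule emb_image_qt[OF F M tk t(1) imgs[rule_format, OF t(1)]])
    then show "z \<in> M" using t(2) x by auto
  qed
  obtain l where l: "set l = ?O" "distinct l" using finite_distinct_list[OF fin] by blast
  have Pl: "?P = (\<Prod>y\<leftarrow>l. [:-y, 1:])" using l by (metis prod.distinct_set_conv_list)
  have P0: "?P \<noteq> 0" using fin by (simp add: prod_zero_iff)
  have Px: "poly ?P x = 0" using fin xO by (simp add: poly_prod prod_zero_iff)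
  define S where "S = {p. coeffs_in p F \<and> p \<noteq> 0 \<and> poly p x = 0 \<and> p dvd ?P}"
  have "?P \<in> S" unfolding S_def using cP P0 Px by simp
  then obtain p where p: "p \<in> S" and pmin: "\<forall>q. q \<in> S \<longrightarrow> degree p \<le> degree q"
    using ex_has_least_nat[of "\<lambda>p. p \<in> S" ?P degree] by blast
  have pS: "coeffs_in p F" "p \<noteq> 0" "poly p x = 0" "p dvd ?P" using p unfolding S_def by auto
  have irr: "irreducible_over F p"
    unfolding irreducible_over_def
  proof (intro conjI)
    show "coeffs_in p F" by (rule pS(1))
    show "1 \<le> degree p"
    proof (rule ccontr)
      assume "\<not> 1 \<le> degree p"
      then have "degree p = 0" by simp
      then have "p = [:coeff p 0:]" using degree_0_id by metis
      then have "poly p x = poly [:coeff p 0:] x" by (rule arg_cong)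
      then have "poly p x = coeff p 0" by simp
      moreover have "coeff p 0 \<noteq> 0" using \<open>p = [:coeff p 0:]\<close> pS(2) by (metis pCons_0_0)
      ultimately show False using pS(3) by simp
    qed
    show "\<not> (\<exists>q r. coeffs_in q F \<and> coeffs_in r F \<and> 1 \<le> degree q \<and> 1 \<le> degree r \<and> p = q * r)"
    proof
      assume "\<exists>q r. coeffs_in q F \<and> coeffs_in r F \<and> 1 \<le> degree q \<and> 1 \<le> degree r \<and> p = q * r"
      then obtain q r where qr: "coeffs_in q F" "coeffs_in r F" "1 \<le> degree q" "1 \<le> degree r" "p = q * r" by blast
      have q0: "q \<noteq> 0" and r0: "r \<noteq> 0" using qr pS(2) by auto
      have dp: "degree p = degree q + degree r" using qr(5) q0 r0 by (simp add: degree_mult_eq)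
      have "poly q x = 0 \<or> poly r x = 0" using pS(3) qr(5) by simp
      then show False
      proof
        assume "poly q x = 0"
        then have "q \<in> S" unfolding S_def using qr q0 pS(4) dvd_trans[of q p ?P] by auto
        then show False using pmin dp qr(4) by fastforce
      next
        assume "poly r x = 0"
        then have "r \<in> S" unfolding S_def using qr r0 pS(4) dvd_trans[of r p ?P] by auto
        then show False using pmin dp qr(3) by fastforce
      qed
    qed
  qed
  obtain l' where l': "set l' \<subseteq> set l" "distinct l'" "p = smult (lead_coeff p) (\<Prod>y\<leftarrow>l'. [:-y, 1:])"
    using dvd_split[OF l(2) _ pS(2)] pS(4) unfolding Pl by blast
  have "set l' \<subseteq> M" using l'(1) l(1) OM by auto
  then have "splits_distinct_in M p" unfolding splits_distinct_in_def
    using l'(2,3) by blast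
  then show ?thesis using irr pS(3) by blast
qed



lemma quad_basis:
  fixes K :: "'a::field set"
  assumes K: "is_subfield K" and two: "(2::'a) \<noteq> 0" and Q: "quadratic_ext K E" and e: "e \<in> E"
  shows "\<exists>p q r. p \<in> K \<and> q \<in> K \<and> r * r \<in> K \<and> r \<in> E \<and> e = p + q * r"
proof -
  have E: "is_subfield E" and KE: "K \<subseteq> E" using Q unfolding quadratic_ext_def by auto
  obtain b1 b2 where bs: "b1 \<in> E" "b2 \<in> E"
    and cov: "\<forall>m\<in>E. \<exists>!(k1, k2). k1 \<in> K \<and> k2 \<in> K \<and> m = k1 * b1 + k2 * b2"
    using Q unfolding quadratic_ext_def by blast
  have coord: "\<exists>k1 k2. k1 \<in> K \<and> k2 \<in> K \<and> m = k1 * b1 + k2 * b2" if "m \<in> E" for m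
  proof -
    have "\<exists>!(k1, k2). k1 \<in> K \<and> k2 \<in> K \<and> m = k1 * b1 + k2 * b2" using cov that by blast
    then obtain pr where "(\<lambda>(k1, k2). k1 \<in> K \<and> k2 \<in> K \<and> m = k1 * b1 + k2 * b2) pr" by (rule ex1E)
    then show ?thesis by (cases pr) auto
  qed
  note S = sf_basic[OF E]
  obtain x1 x2 where x: "x1 \<in> K" "x2 \<in> K" "1 = x1 * b1 + x2 * b2" using coord S(2) by blast
  obtain y1 y2 where y: "y1 \<in> K" "y2 \<in> K" "e = y1 * b1 + y2 * b2" using coord e by blast
  obtain z1 z2 where z: "z1 \<in> K" "z2 \<in> K" "e * e = z1 * b1 + z2 * b2" using coord S(4)[OF e e] by blast
  note SK = sf_basic[OF K]
  show ?thesis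
  proof (cases "x1 * y2 - x2 * y1 = 0")
    case True
    have "e \<in> K"
    proof (cases "x1 = 0")
      case False
      define c where "c = y1 / x1"
      have "y2 = c * x2" using True False unfolding c_def by (simp add: field_simps)
      moreover have "y1 = c * x1" using False unfolding c_def by simp
      ultimately have "e = c * (x1 * b1 + x2 * b2)" using y(3) by (simp add: algebra_simps)
      then have "e = c" using x(3) by simp
      then show ?thesis unfolding c_def using SK x y by simp
    next
      case x10: True
      then have x20: "x2 \<noteq> 0" using x(3) by auto
      then have "y1 = 0" using True x10 by simp
      define c where "c = y2 / x2"
      have "y2 = c * x2" using x20 unfolding c_def by simp
      then have "e = c * (x1 * b1 + x2 * b2)" using y(3) x10 \<open>y1 = 0\<close> by (simp add: algebra_simps)
      then have "e = c" using x(3) by simp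
      then show ?thesis unfolding c_def using SK x y by simp
    qed
    then show ?thesis using S(1) SK(1) by (intro exI[of _ e] exI[of _ 0]) simp
  next
    case False
    define l0 where "l0 = y1 * z2 - y2 * z1"
    define l1 where "l1 = z1 * x2 - z2 * x1"
    define l2 where "l2 = x1 * y2 - x2 * y1"
    have l2: "l2 \<noteq> 0" using False unfolding l2_def .
    have "l0 * 1 + l1 * e + l2 * (e * e) =
        l0 * (x1 * b1 + x2 * b2) + l1 * (y1 * b1 + y2 * b2) + l2 * (z1 * b1 + z2 * b2)"
      using x(3) y(3) z(3) by simp
    also have "\<dots> = 0" unfolding l0_def l1_def l2_def by (simp add: algebra_simps)
    finally have eq: "l0 + l1 * e + l2 * (e * e) = 0" by simp
    define B where "B = l1 / l2"
    define C where "C = l0 / l2"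
    have eq2: "e * e + B * e + C = 0" using eq l2 unfolding B_def C_def by (simp add: field_simps)
    define r where "r = 2 * e + B"
    have BK: "B \<in> K" "C \<in> K" unfolding B_def C_def l0_def l1_def l2_def using SK x y z by auto
    have "r * r = B * B - 4 * C + 4 * (e * e + B * e + C)" unfolding r_def by (simp add: algebra_simps)
    then have rr: "r * r = B * B - 4 * C" using eq2 by simp
    have four: "(4::'a) \<in> K" using SK(4)[OF sf_num[OF K] sf_num[OF K]] by simp
    have rK: "r * r \<in> K" unfolding rr using SK BK four by simp
    have rE: "r \<in> E" unfolding r_def using S e KE BK sf_num[OF E] by auto
    have h1: "(1 / 2) * r = ((1 / 2) * 2) * e + B / 2" unfolding r_def by (simp add: algebra_simps)
    have h2: "(1 / 2) * (2::'a) = 1" using two by simp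
    have "e = (- B / 2) + (1 / 2) * r" unfolding h1 h2 by simp
    moreover have "- B / 2 \<in> K" "1 / 2 \<in> K" using SK BK sf_num[OF K] by auto
    ultimately show ?thesis using rK rE by blast
  qed
qed

lemma emb_sq:
  assumes F: "is_subfield F" and tk: "tok F rs" and t: "emb F (qt F rs) t" and r: "r \<in> set rs"
  shows "t r * t r = t (r * r)"
proof -
  have "r \<in> qt F rs" using qt_gens[OF F tk] r by auto
  then show ?thesis using emb_mult[OF F qt_subfield[OF F tk] qt_F[OF F tk] t] by simp
qed

lemma emb_sqF:
  assumes F: "is_subfield F" and tk: "tok F rs" and t: "emb F (qt F rs) t" and r: "r \<in> set rs"
    and rF: "r * r \<in> F"
  shows "t r = r \<or> t r = - r"
proof -
  have "t r * t r = r * r" using emb_sq[OF F tk t r] emb_F[OF F qt_subfield[OF F tk] qt_F[OF F tk] t rF] by simp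
  then show ?thesis by (rule sq_eq_cases)
qed

lemma quad_ext_adj:
  assumes K: "is_subfield K" and rr: "r * r \<in> K" and rK: "r \<notin> K"
  shows "quadratic_ext K (adj K r)"
  unfolding quadratic_ext_def
proof (intro conjI)
  show "is_subfield K" by (rule K)
  show "is_subfield (adj K r)" by (rule adj_subfield[OF K rr])
  show "K \<subseteq> adj K r" by (rule adj_sup(1)[OF K])
  have one: "1 \<in> adj K r" using adj_sup(1)[OF K] sf_basic(2)[OF K] by auto
  have "\<forall>m\<in>adj K r. \<exists>!(k1, k2). k1 \<in> K \<and> k2 \<in> K \<and> m = k1 * 1 + k2 * r"
  proof
    fix m assume "m \<in> adj K r"
    then obtain a b where ab: "a \<in> K" "b \<in> K" "m = a + b * r" unfolding adj_def by blast
    show "\<exists>!(k1, k2). k1 \<in> K \<and> k2 \<in> K \<and> m = k1 * 1 + k2 * r"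
    proof (rule ex1I[of _ "(a, b)"])
      show "(\<lambda>(k1, k2). k1 \<in> K \<and> k2 \<in> K \<and> m = k1 * 1 + k2 * r) (a, b)" using ab by simp
    next
      fix pr assume "(\<lambda>(k1, k2). k1 \<in> K \<and> k2 \<in> K \<and> m = k1 * 1 + k2 * r) pr"
      then obtain c d where "pr = (c, d)" "c \<in> K" "d \<in> K" "m = c + d * r" by (cases pr) auto
      then show "pr = (a, b)" using adj_unique[OF K rK ab(1,2)] ab(3) by metis
    qed
  qed
  then show "\<exists>b1\<in>adj K r. \<exists>b2\<in>adj K r. \<forall>m\<in>adj K r. \<exists>!(k1, k2). k1 \<in> K \<and> k2 \<in> K \<and> m = k1 * b1 + k2 * b2"
    using one adj_sup(2)[OF K] by blast
qed


lemma tower1: "tower K (Suc 0) = gen_field (K \<union> \<Union>{E. quadratic_ext K E \<and> galois_over K E})"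
  by simp

lemma tower2: "tower K 2 = gen_field (tower K (Suc 0) \<union> \<Union>{E. quadratic_ext (tower K (Suc 0)) E \<and> galois_over K E})"
  by (simp add: numeral_2_eq_2)

lemma E_T1: "quadratic_ext K E \<Longrightarrow> galois_over K E \<Longrightarrow> E \<subseteq> tower K (Suc 0)"
proof -
  assume "quadratic_ext K E" "galois_over K E"
  then have "E \<in> {E. quadratic_ext K E \<and> galois_over K E}" by simp
  then have "E \<subseteq> K \<union> \<Union>{E. quadratic_ext K E \<and> galois_over K E}" by (rule Union_upper[THEN le_supI2])
  also have "\<dots> \<subseteq> tower K (Suc 0)" unfolding tower1 by (rule gen_field_sup)
  finally show ?thesis .
qed

lemma K_T1: "K \<subseteq> tower K (Suc 0)"
  unfolding tower1 using gen_field_sup by (rule le_supE)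

lemma sqrt_T1:
  fixes F :: "'a::field set"
  assumes F: "is_subfield F" and two: "(2::'a) \<noteq> 0" and qc: "\<forall>x::'a. \<exists>y. y * y = x"
    and rF: "r * r \<in> F"
  shows "r \<in> tower F (Suc 0)"
proof (cases "r \<in> F")
  case True then show ?thesis using K_T1 by blast
next
  case False
  let ?E = "adj F r"
  have tk: "tok F [r]" using rF by simp
  have qE: "qt F [r] = ?E" by simp
  have E: "is_subfield ?E" using adj_subfield[OF F rF] .
  have FE: "F \<subseteq> ?E" using adj_sup(1)[OF F] .
  have rE: "r \<in> ?E" "- r \<in> ?E" using adj_sup(2)[OF F] sf_basic(5)[OF E] by auto
  have imgs: "\<forall>t. emb F (qt F [r]) t \<longrightarrow> t ` set [r] \<subseteq> ?E"
  proof (intro allI impI)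
    fix t assume t: "emb F (qt F [r]) t"
    have "t r = r \<or> t r = - r" using emb_sqF[OF F tk t _ rF] by simp
    then show "t ` set [r] \<subseteq> ?E" using rE by auto
  qed
  have "galois_over F ?E" unfolding galois_over_def
  proof (intro conjI ballI)
    fix x assume "x \<in> ?E"
    then have "x \<in> qt F [r]" by simp
    then show "\<exists>p. irreducible_over F p \<and> poly p x = 0 \<and> splits_distinct_in ?E p"
      using galois_gen[OF F two qc tk E FE imgs] by blast
  qed (use F E FE in auto)
  moreover have "quadratic_ext F ?E" using quad_ext_adj[OF F rF False] .
  ultimately have "?E \<subseteq> tower F (Suc 0)" using E_T1 by blast
  then show ?thesis using rE by auto
qed

lemma T1_struct:
  fixes F :: "'a::field set"
  assumes F: "is_subfield F" and two: "(2::'a) \<noteq> 0"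
    and x: "x \<in> tower F (Suc 0)"
  shows "\<exists>rs. (\<forall>r\<in>set rs. r * r \<in> F \<and> r \<in> tower F (Suc 0)) \<and> x \<in> qt F rs"
proof -
  let ?T = "tower F (Suc 0)"
  define U where "U = {x. \<exists>rs. (\<forall>r\<in>set rs. r * r \<in> F \<and> r \<in> ?T) \<and> x \<in> qt F rs}"
  have join: "\<exists>rs. (\<forall>r\<in>set rs. r * r \<in> F \<and> r \<in> ?T) \<and> x \<in> qt F rs \<and> y \<in> qt F rs"
    if xU: "x \<in> U" and yU: "y \<in> U" for x y
  proof -
    obtain rs1 where r1: "\<forall>r\<in>set rs1. r * r \<in> F \<and> r \<in> ?T" "x \<in> qt F rs1" using xU unfolding U_def by blast
    obtain rs2 where r2: "\<forall>r\<in>set rs2. r * r \<in> F \<and> r \<in> ?T" "y \<in> qt F rs2" using yU unfolding U_def by blast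
    have "\<forall>r\<in>set (rs1 @ rs2). r * r \<in> F" using r1(1) r2(1) by auto
    then have tk: "tok F (rs1 @ rs2)" by (rule tok_F[OF F])
    have "qt F rs1 \<subseteq> qt F (rs1 @ rs2)"
      using qt_least[OF qt_subfield[OF F tk] qt_F[OF F tk]] qt_gens[OF F tk] by auto
    moreover have "qt F rs2 \<subseteq> qt F (rs1 @ rs2)" using qt_suffix[OF F tk] .
    ultimately show ?thesis using r1 r2 by (intro exI[of _ "rs1 @ rs2"]) auto
  qed
  have U: "is_subfield U" unfolding is_subfield_def
  proof (intro conjI ballI)
    show "0 \<in> U" "1 \<in> U" unfolding U_def using sf_basic(1,2)[OF F] by (auto intro!: exI[of _ "[]"])
  next
    fix x y assume xy: "x \<in> U" "y \<in> U"
    obtain rs where rs: "\<forall>r\<in>set rs. r * r \<in> F \<and> r \<in> ?T" "x \<in> qt F rs" "y \<in> qt F rs" using join[OF xy] by blast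
    have "\<forall>r\<in>set rs. r * r \<in> F" using rs(1) by auto
    then have Q: "is_subfield (qt F rs)" by (rule qt_subfield[OF F tok_F[OF F]])
    show "x + y \<in> U" unfolding U_def using rs sf_basic(3)[OF Q] by blast
    show "x * y \<in> U" unfolding U_def using rs sf_basic(4)[OF Q] by blast
  next
    fix x assume "x \<in> U"
    then obtain rs where rs: "\<forall>r\<in>set rs. r * r \<in> F \<and> r \<in> ?T" "x \<in> qt F rs" unfolding U_def by blast
    have "\<forall>r\<in>set rs. r * r \<in> F" using rs(1) by auto
    then have Q: "is_subfield (qt F rs)" by (rule qt_subfield[OF F tok_F[OF F]])
    show "- x \<in> U" unfolding U_def using rs sf_basic(5)[OF Q] by blast
    show "inverse x \<in> U" unfolding U_def using rs sf_basic(6)[OF Q] by blast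
  qed
  have FU: "F \<subseteq> U" unfolding U_def by (auto intro!: exI[of _ "[]"])
  have EU: "E \<subseteq> U" if E: "quadratic_ext F E" "galois_over F E" for E
  proof
    fix e assume e: "e \<in> E"
    obtain p q r where pqr: "p \<in> F" "q \<in> F" "r * r \<in> F" "r \<in> E" "e = p + q * r"
      using quad_basis[OF F two E(1) e] by blast
    have "E \<subseteq> ?T" using E_T1 E by blast
    then have "r \<in> ?T" using pqr by auto
    moreover have "e \<in> qt F [r]" using pqr adj_mem by simp
    ultimately show "e \<in> U" unfolding U_def using pqr(3) by (intro CollectI exI[of _ "[r]"]) simp
  qed
  have "F \<union> \<Union>{E. quadratic_ext F E \<and> galois_over F E} \<subseteq> U" using FU EU by blast
  then have "?T \<subseteq> U" unfolding tower1 by (rule gen_field_sub[OF U])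
  then show ?thesis using x unfolding U_def by blast
qed


lemma T1_sub_T2: "tower K (Suc 0) \<subseteq> tower K 2"
  unfolding tower2 using gen_field_sup by (rule le_supE)

lemma E_T2: "quadratic_ext (tower K (Suc 0)) E \<Longrightarrow> galois_over K E \<Longrightarrow> E \<subseteq> tower K 2"
proof -
  assume "quadratic_ext (tower K (Suc 0)) E" "galois_over K E"
  then have "E \<in> {E. quadratic_ext (tower K (Suc 0)) E \<and> galois_over K E}" by simp
  then have "E \<subseteq> tower K (Suc 0) \<union> \<Union>{E. quadratic_ext (tower K (Suc 0)) E \<and> galois_over K E}"
    by (rule Union_upper[THEN le_supI2])
  also have "\<dots> \<subseteq> tower K 2" unfolding tower2 by (rule gen_field_sup)
  finally show ?thesis .
qed

lemma T1_sf: "is_subfield (tower K (Suc 0))"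
  unfolding tower1 by (rule gen_field_subfield)

lemma T2_sf: "is_subfield (tower K 2)"
  unfolding tower2 by (rule gen_field_subfield)

lemma main_sqrt:
  fixes F :: "'a::field set"
  assumes F: "is_subfield F" and two: "(2::'a) \<noteq> 0" and qc: "\<forall>x::'a. \<exists>y. y * y = x"
    and aF: "s * s \<in> F" and sF: "s \<notin> F"
    and beta: "beta \<in> adj F s" and rb: "rb * rb = beta"
  shows "rb \<in> tower F 2"
proof -
  define T1 where "T1 = tower F (Suc 0)"
  define T2 where "T2 = tower F 2"
  have T1: "is_subfield T1" unfolding T1_def by (rule T1_sf)
  have T2: "is_subfield T2" unfolding T2_def by (rule T2_sf)
  have FT1: "F \<subseteq> T1" unfolding T1_def by (rule K_T1)
  have T12: "T1 \<subseteq> T2" unfolding T1_def T2_def by (rule T1_sub_T2)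
  have sT1: "s \<in> T1" unfolding T1_def using sqrt_T1[OF F two qc aF] .
  have T1s: "\<exists>rs. (\<forall>r\<in>set rs. r * r \<in> F \<and> r \<in> T1) \<and> x \<in> qt F rs" if "x \<in> T1" for x
    using T1_struct[OF F two that[unfolded T1_def]] unfolding T1_def .
  have ET2: "quadratic_ext T1 E \<Longrightarrow> galois_over F E \<Longrightarrow> E \<subseteq> T2" for E
    unfolding T1_def T2_def by (rule E_T2)
  have T1sq: "r * r \<in> F \<Longrightarrow> r \<in> T1" for r unfolding T1_def using sqrt_T1[OF F two qc] by blast
  note S1 = sf_basic[OF T1]
  obtain b0 b1 where b: "b0 \<in> F" "b1 \<in> F" "beta = b0 + b1 * s" using beta unfolding adj_def by blast
  define beta' where "beta' = b0 - b1 * s"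
  have b': "beta' = b0 + (- b1) * s" unfolding beta'_def by simp
  have b01: "b0 \<in> T1" "b1 \<in> T1" using b FT1 by auto
  have bT1: "beta \<in> T1" "beta' \<in> T1" unfolding b(3) beta'_def using S1(3,4,7) b01 sT1 by auto
  have "rb \<in> T2"
  proof (cases "beta = 0")
    case True
    then have "rb = 0" using rb by simp
    then show ?thesis using sf_basic(1)[OF T2] by simp
  next
    case bnz: False
    then have rb0: "rb \<noteq> 0" using rb by auto
    obtain w0 where w0: "w0 * w0 = beta'" using qc by blast
    define w where "w = (if rb + w0 = 0 then - w0 else w0)"
    have ww: "w * w = beta'" unfolding w_def using w0 by simp
    define u where "u = rb + w"
    have u0: "u \<noteq> 0"
    proof (cases "rb + w0 = 0")
      case True
      then have "w0 = - rb" by (simp add: add_eq_0_iff)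
      then have "u = 2 * rb" unfolding u_def w_def using True by simp
      then show ?thesis using two rb0 by simp
    next
      case False then show ?thesis unfolding u_def w_def by simp
    qed
    define g where "g = rb * w"
    have "g * g = beta * beta'" unfolding g_def using rb ww by (metis mult.assoc mult.commute)
    also have "\<dots> = b0 * b0 - b1 * b1 * (s * s)" unfolding b(3) beta'_def by (simp add: algebra_simps)
    finally have gg: "g * g \<in> F" using sf_basic[OF F] b aF by simp
    have gT1: "g \<in> T1" using T1sq[OF gg] .
    have "u * u = beta + beta' + 2 * g" unfolding u_def g_def using rb ww by (simp add: algebra_simps)
    then have uu: "u * u \<in> T1" using S1 bT1 gT1 sf_num[OF T1] by simp
    have "beta - beta' = (rb - w) * u" unfolding u_def using rb ww by (simp add: algebra_simps)
    then have "(beta - beta') / u = rb - w" using u0 by simp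
    then have "u + (beta - beta') / u = 2 * rb" unfolding u_def by simp
    then have rb_eq: "rb = (u + (beta - beta') / u) / 2" using two by simp
    have w_eq: "w = u - rb" unfolding u_def by simp
    show ?thesis
    proof (cases "u \<in> T1")
      case True
      have "rb \<in> T1" unfolding rb_eq using S1 True bT1 sf_num[OF T1] by simp
      then show ?thesis using T12 by auto
    next
      case uT1: False
      let ?E = "adj T1 u"
      have E: "is_subfield ?E" by (rule adj_subfield[OF T1 uu])
      have T1E: "T1 \<subseteq> ?E" by (rule adj_sup(1)[OF T1])
      have uE: "u \<in> ?E" by (rule adj_sup(2)[OF T1])
      note SE = sf_basic[OF E]
      have bE: "beta \<in> ?E" "beta' \<in> ?E" using bT1 T1E by auto
      have rbE: "rb \<in> ?E" unfolding rb_eq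
        by (rule SE(8)[OF SE(3)[OF uE SE(8)[OF SE(7)[OF bE] uE]] sf_num[OF E]])
      have wE: "w \<in> ?E" unfolding w_eq using SE uE rbE by auto
      have FE: "F \<subseteq> ?E" using FT1 T1E by auto
      have galE: "galois_over F ?E" unfolding galois_over_def
      proof (intro conjI ballI)
        fix x assume "x \<in> ?E"
        then obtain p q where pq: "p \<in> T1" "q \<in> T1" "x = p + q * u" unfolding adj_def by blast
        obtain rs1 where rs1: "\<forall>r\<in>set rs1. r * r \<in> F \<and> r \<in> T1" "p \<in> qt F rs1"
          using T1s[OF pq(1)] by blast
        obtain rs2 where rs2: "\<forall>r\<in>set rs2. r * r \<in> F \<and> r \<in> T1" "q \<in> qt F rs2"
          using T1s[OF pq(2)] by blast
        let ?ys = "[w, rb, s]"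
        have tks: "tok F [s]" using aF by simp
        have As: "is_subfield (adj F s)" using adj_subfield[OF F aF] .
        have "beta' \<in> adj F s" unfolding b' using adj_mem b sf_basic(5)[OF F] by blast
        then have "beta' \<in> adj (adj F s) rb" using adj_sup(1)[OF As] by auto
        then have tky: "tok F ?ys" using rb beta ww aF by simp
        let ?rs = "(rs1 @ rs2) @ ?ys"
        have "\<forall>r\<in>set (rs1 @ rs2). r * r \<in> qt F ?ys" using rs1(1) rs2(1) qt_F[OF F tky] by auto
        then have tk: "tok F ?rs" by (rule tok_append[OF F tky])
        let ?Q = "qt F ?rs"
        have Q: "is_subfield ?Q" by (rule qt_subfield[OF F tk])
        have FQ: "F \<subseteq> ?Q" by (rule qt_F[OF F tk])
        have gQ: "set ?rs \<subseteq> ?Q" by (rule qt_gens[OF F tk])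
        have "qt F rs1 \<subseteq> ?Q" using qt_least[OF Q FQ] gQ by auto
        moreover have "qt F rs2 \<subseteq> ?Q" using qt_least[OF Q FQ] gQ by auto
        ultimately have pqQ: "p \<in> ?Q" "q \<in> ?Q" using rs1(2) rs2(2) by auto
        have "u \<in> ?Q" unfolding u_def using gQ sf_basic(3)[OF Q] by auto
        then have xQ: "x \<in> ?Q" unfolding pq(3) using pqQ sf_basic(3,4)[OF Q] by simp
        have imgs: "\<forall>t. emb F ?Q t \<longrightarrow> t ` set ?rs \<subseteq> ?E"
        proof (intro allI impI subsetI)
          fix t z assume t: "emb F ?Q t" and "z \<in> t ` set ?rs"
          then obtain r where r: "r \<in> set ?rs" "z = t r" by blast
          have pm: "t r = r \<or> t r = - r" if "r \<in> set ?rs" "r * r \<in> F" for r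
            using emb_sqF[OF F tk t that] .
          have ts: "t s = s \<or> t s = - s" using pm aF by simp
          have conj: "t (b0 + c * s) = b0 + c * s \<or> t (b0 + c * s) = b0 - c * s" if c: "c \<in> F" for c
          proof -
            have "t (b0 + c * s) = b0 + c * t s"
              using emb_add[OF F Q FQ t] emb_mult[OF F Q FQ t] emb_F[OF F Q FQ t] b c FQ gQ
                sf_basic(4)[OF Q] by (simp add: subset_iff)
            then show ?thesis using ts by auto
          qed
          have sqc: "t y = rb \<or> t y = - rb \<or> t y = w \<or> t y = - w"
            if y: "y \<in> set ?rs" "y * y = beta \<or> y * y = beta'" for y
          proof -
            have "t y * t y = t (y * y)" using emb_sq[OF F tk t y(1)] .
            moreover have "t beta = beta \<or> t beta = beta'" using conj[OF b(2)] unfolding b(3) beta'_def by simp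
            moreover have "t beta' = beta \<or> t beta' = beta'"
              using conj[OF sf_basic(5)[OF F b(2)]] unfolding b(3) b' by auto
            ultimately have "t y * t y = rb * rb \<or> t y * t y = w * w" using y(2) rb ww by auto
            then show ?thesis using sq_eq_cases by blast
          qed
          show "z \<in> ?E"
          proof -
            have "r \<in> set rs1 \<or> r \<in> set rs2 \<or> r = w \<or> r = rb \<or> r = s" using r(1) by auto
            then show ?thesis
            proof (elim disjE)
              assume "r \<in> set rs1"
              then have "r * r \<in> F" "r \<in> ?E" using rs1(1) T1E by auto
              then show ?thesis using pm[OF r(1)] r(2) SE(5) by auto
            next
              assume "r \<in> set rs2"
              then have "r * r \<in> F" "r \<in> ?E" using rs2(1) T1E by auto
              then show ?thesis using pm[OF r(1)] r(2) SE(5) by auto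
            next
              assume "r = w"
              then have "t r = rb \<or> t r = - rb \<or> t r = w \<or> t r = - w" using sqc r(1) ww by blast
              then show ?thesis using r(2) rbE wE SE(5) by auto
            next
              assume "r = rb"
              then have "t r = rb \<or> t r = - rb \<or> t r = w \<or> t r = - w" using sqc r(1) rb by blast
              then show ?thesis using r(2) rbE wE SE(5) by auto
            next
              assume "r = s"
              then show ?thesis using ts r(2) sT1 T1E SE(5) by auto
            qed
          qed
        qed
        show "\<exists>p. irreducible_over F p \<and> poly p x = 0 \<and> splits_distinct_in ?E p"
          by (rule galois_gen[OF F two qc tk E FE imgs xQ])
      qed (use F E FE in auto)
      have "quadratic_ext T1 ?E" by (rule quad_ext_adj[OF T1 uu uT1])
      then have "?E \<subseteq> T2" using ET2 galE by blast
      then show ?thesis using rbE by auto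
    qed
  qed
  then show ?thesis unfolding T2_def .
qed


theorem lemma1:
  fixes F :: "'a::field set" and a s :: 'a
  assumes "is_subfield F"
    and "(2::'a) \<noteq> 0"
    and "is_quadratic_closure_of F"
    and "a \<in> F" and "a \<noteq> 0"
    and "\<not> (\<exists>b\<in>F. b * b = a)"
    and "s * s = a"
  shows "Kup (gen_field (F \<union> {s})) 2 \<subseteq> Kup F 3"
proof -
  note F = assms(1) and two = assms(2)
  have qc: "\<forall>x::'a. \<exists>y. y * y = x"
    using assms(3) unfolding is_quadratic_closure_of_def quadratically_closed_def by blast
  have aF: "s * s \<in> F" using assms(4,7) by simp
  have sF: "s \<notin> F" using assms(6,7) by blast
  let ?L = "gen_field (F \<union> {s})"
  have L: "is_subfield ?L" by (rule gen_field_subfield)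
  have "F \<union> {s} \<subseteq> adj F s" using adj_sup[OF F] by auto
  then have LA: "?L \<subseteq> adj F s" by (rule gen_field_sub[OF adj_subfield[OF F aF]])
  have "F \<union> {s} \<subseteq> tower F (Suc 0)" using K_T1 sqrt_T1[OF F two qc aF] by auto
  then have "?L \<subseteq> tower F (Suc 0)" by (rule gen_field_sub[OF T1_sf])
  then have LT2: "?L \<subseteq> tower F 2" using T1_sub_T2 by blast
  note S2 = sf_basic[OF T2_sf[of F]]
  have EE: "E \<subseteq> tower F 2" if Q: "quadratic_ext ?L E" for E
  proof
    fix e assume e: "e \<in> E"
    obtain p q r where pqr: "p \<in> ?L" "q \<in> ?L" "r * r \<in> ?L" "e = p + q * r"
      using quad_basis[OF L two Q e] by blast
    have "r * r \<in> adj F s" using pqr(3) LA by auto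
    then have "r \<in> tower F 2" using main_sqrt[OF F two qc aF sF] by blast
    moreover have "p \<in> tower F 2" "q \<in> tower F 2" using pqr LT2 by auto
    ultimately show "e \<in> tower F 2" unfolding pqr(4) using S2(3,4) by blast
  qed
  have "?L \<union> \<Union>{E. quadratic_ext ?L E \<and> galois_over ?L E} \<subseteq> tower F 2"
    using LT2 EE by blast
  then have "tower ?L (Suc 0) \<subseteq> tower F 2" unfolding tower1 by (rule gen_field_sub[OF T2_sf])
  moreover have "Kup ?L 2 = tower ?L (Suc 0)" unfolding Kup_def by simp
  moreover have "Kup F 3 = tower F 2" unfolding Kup_def by simp
  ultimately show ?thesis by simp
qed


end
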